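(* For $\kappa\in(8/3,8)$, the function $\gamma_\kappa$ is strictly convex on $[0,\infty)$.
   Context: $\Lambda_\kappa(\lambda)=\log\big(-\cos(4\pi/\kappa)/\cos(\pi\sqrt{(1-4/\kappa)^2+8\lambda/\kappa})\big)$ for $\lambda<1-\frac2\kappa-\frac{3\kappa}{32}$ (with $\cos(\pi\sqrt{\cdot})=\cosh(\pi\sqrt{-\cdot})$ for negative argument) and $+\infty$ otherwise; $\Lambda_\kappa^\star(x)=\sup_\lambda(\lambda x-\Lambda_\kappa(\lambda))$; $\gamma_\kappa(\nu)=\nu\Lambda_\kappa^\star(1/\nu)$ for $\nu>0$ and $\gamma_\kappa(0)=1-\frac2\kappa-\frac{3\kappa}{32}$. *)

theory Defs
  imports "HOL-Analysis.Analysis"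
begin

definition lam0 :: "real \<Rightarrow> real" where
  "lam0 \<kappa> = 1 - 2 / \<kappa> - 3 * \<kappa> / 32"

text \<open>cos(pi sqrt a), read as cosh(pi sqrt(-a)) for negative a.\<close>
definition cos_sqrt :: "real \<Rightarrow> real" where
  "cos_sqrt a = (if a \<ge> 0 then cos (pi * sqrt a) else cosh (pi * sqrt (- a)))"

definition Lambda :: "real \<Rightarrow> real \<Rightarrow> ereal" where
  "Lambda \<kappa> l =
     (if l < lam0 \<kappa>
      then ereal (ln (- cos (4 * pi / \<kappa>) /
                      cos_sqrt ((1 - 4 / \<kappa>)\<^sup>2 + 8 * l / \<kappa>)))
      else \<infinity>)"

definition Lambda_star :: "real \<Rightarrow> real \<Rightarrow> ereal" where
  "Lambda_star \<kappa> x = (SUP l::real. ereal (l * x) - Lambda \<kappa> l)"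

text \<open>gamma_kappa, defined for nu \<ge> 0 (value for nu < 0 is irrelevant).\<close>
definition gamma :: "real \<Rightarrow> real \<Rightarrow> ereal" where
  "gamma \<kappa> \<nu> = (if \<nu> = 0 then ereal (lam0 \<kappa>)
                 else ereal \<nu> * Lambda_star \<kappa> (1 / \<nu>))"

definition strict_convex_on_ereal :: "real set \<Rightarrow> (real \<Rightarrow> ereal) \<Rightarrow> bool" where
  "strict_convex_on_ereal S f \<longleftrightarrow>
     (\<forall>x\<in>S. \<forall>y\<in>S. \<forall>t. x \<noteq> y \<and> 0 < t \<and> t < 1 \<longrightarrow>
        f (t * x + (1 - t) * y) < ereal t * f x + ereal (1 - t) * f y)"

end

theory Submission imports Defs begin

definition csc :: "nat \<Rightarrow> real" where
  "csc n = (-1)^n * pi^(2*n) / fact (2*n)"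

lemma cosh_paired: "(\<lambda>n. x ^ (2 * n) / fact (2 * n)) sums cosh (x::real)"
proof -
  have "(\<lambda>n. \<Sum>k = n * 2..<n * 2 + 2. (if even k then x ^ k /\<^sub>R fact k else 0)) sums cosh x"
    by (rule sums_group) (use cosh_converges [of x] in auto)
  then show ?thesis
    by (simp add: ac_simps divide_inverse)
qed

lemma cos_sqrt_sums: "(\<lambda>n. csc n * u ^ n) sums cos_sqrt u"
proof (cases "u \<ge> 0")
  case True
  have e: "(- 1) ^ n / (fact (2 * n)) * (pi * sqrt u) ^ (2 * n) = csc n * u ^ n" for n
  proof -
    have "(pi * sqrt u) ^ (2 * n) = ((pi * sqrt u)^2) ^ n" by (rule power_mult)
    also have "(pi * sqrt u)^2 = pi^2 * u" using True by (simp add: power_mult_distrib)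
    also have "(pi^2 * u) ^ n = pi^(2*n) * u^n" by (simp add: power_mult_distrib power_mult)
    finally show ?thesis by (simp add: csc_def)
  qed
  show ?thesis using cos_paired[of "pi * sqrt u"] True unfolding e by (simp add: cos_sqrt_def)
next
  case False
  have e: "(pi * sqrt (-u)) ^ (2 * n) / fact (2 * n) = csc n * u ^ n" for n
  proof -
    have "(pi * sqrt (-u)) ^ (2 * n) = ((pi * sqrt (-u))^2) ^ n" by (rule power_mult)
    also have "(pi * sqrt (-u))^2 = pi^2 * (-u)" using False by (simp add: power_mult_distrib)
    also have "(pi^2 * (-u)) ^ n = (pi^2)^n * (-u)^n" by (rule power_mult_distrib)
    also have "(-u)^n = (-1)^n * u^n" by (rule power_minus)
    also have "(pi^2)^n = pi^(2*n)" by (rule power_mult[symmetric])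
    finally show ?thesis by (simp add: csc_def)
  qed
  show ?thesis using cosh_paired[of "pi * sqrt (-u)"] False unfolding e by (simp add: cos_sqrt_def)
qed

lemma cos_sqrt_eq: "cos_sqrt = (\<lambda>u. \<Sum>n. csc n * u ^ n)"
  using cos_sqrt_sums sums_unique by (auto intro!: ext)

lemma cos_sqrt_deriv: "\<exists>D. (cos_sqrt has_real_derivative D) (at u)"
proof -
  have "\<And>y. summable (\<lambda>n. csc n * y ^ n)" using cos_sqrt_sums sums_summable by blast
  from termdiffs_strong_converges_everywhere[of csc, OF this]
  show ?thesis unfolding cos_sqrt_eq by blast
qed

lemma cos_sqrt_cont: "isCont cos_sqrt u"
  using cos_sqrt_deriv DERIV_isCont by blast

definition cc :: "real \<Rightarrow> real" where "cc k = - cos (4 * pi / k)"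
definition aa :: "real \<Rightarrow> real" where "aa k = (1 - 4 / k)\<^sup>2"
definition bb :: "real \<Rightarrow> real" where "bb k = 8 / k"
definition gg :: "real \<Rightarrow> real \<Rightarrow> real" where
  "gg k l = ln (cc k / cos_sqrt (aa k + bb k * l))"
definition hh :: "real \<Rightarrow> real \<Rightarrow> real \<Rightarrow> real" where
  "hh k v l = l - v * gg k l"
definition l1 :: "real \<Rightarrow> real" where "l1 k = - aa k / bb k"

lemma cc_pos: assumes "8/3 < k" "k < 8" shows "cc k > 0"
proof -
  have k0: "k > 0" using assms by simp
  have "4 * pi / k > pi / 2" using assms k0 by (simp add: field_simps)
  moreover have "4 * pi / k < 3 * pi / 2" using assms k0 by (simp add: field_simps)
  ultimately have "0 < cos (4 * pi / k - pi)" by (intro cos_gt_zero_pi) auto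
  then show ?thesis by (simp add: cc_def)
qed

lemma bb_pos: assumes "8/3 < k" shows "bb k > 0"
  using assms by (simp add: bb_def)

lemma lam0_u: assumes "8/3 < k" shows "aa k + bb k * lam0 k = 1/4"
  using assms by (simp add: aa_def bb_def lam0_def field_simps power2_eq_square)

lemma u_lt: assumes "8/3 < k" "l < lam0 k" shows "aa k + bb k * l < 1/4"
proof -
  have "bb k * l < bb k * lam0 k" using assms bb_pos by simp
  then show ?thesis using lam0_u[OF assms(1)] by simp
qed

lemma cos_sqrt_pos: assumes "u < 1/4" shows "cos_sqrt u > 0"
proof (cases "u \<ge> 0")
  case True
  have "sqrt u < 1/2" using assms by (intro real_less_lsqrt) (auto simp: power2_eq_square)
  then have "pi * sqrt u < pi / 2" using pi_gt_zero by simp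
  moreover have "0 \<le> pi * sqrt u" using True by simp
  moreover have "- (pi/2) < 0" using pi_gt_zero by simp
  ultimately have "0 < cos (pi * sqrt u)" by (intro cos_gt_zero_pi) linarith+
  then show ?thesis using True by (simp add: cos_sqrt_def)
next
  case False
  then show ?thesis by (simp add: cos_sqrt_def)
qed

lemma Lambda_eq: assumes "l < lam0 k" shows "Lambda k l = ereal (gg k l)"
  using assms by (simp add: Lambda_def gg_def cc_def aa_def bb_def)

lemma Lambda_inf: assumes "\<not> l < lam0 k" shows "Lambda k l = \<infinity>"
  using assms by (simp add: Lambda_def)

lemma l1_lt: assumes "8/3 < k" shows "l1 k < lam0 k"
proof -
  have b: "bb k > 0" using bb_pos assms by simp
  have "bb k * l1 k = - aa k" using b by (simp add: l1_def)
  then have "bb k * l1 k < bb k * lam0 k" using lam0_u[OF assms] by simp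
  then show ?thesis using b by simp
qed

lemma gg_l1: assumes "8/3 < k" shows "gg k (l1 k) = ln (cc k)"
proof -
  have b: "bb k > 0" using bb_pos assms by simp
  then have "aa k + bb k * l1 k = 0" by (simp add: l1_def)
  then show ?thesis by (simp add: gg_def cos_sqrt_def)
qed

lemma gg_cont: assumes "8/3 < k" "k < 8" shows "continuous_on {..<lam0 k} (gg k)"
proof -
  have "\<forall>l\<in>{..<lam0 k}. isCont (gg k) l"
  proof
    fix l assume "l \<in> {..<lam0 k}"
    then have p: "cos_sqrt (aa k + bb k * l) > 0" using u_lt[OF assms(1)] cos_sqrt_pos by auto
    have c1: "isCont (\<lambda>l. cos_sqrt (aa k + bb k * l)) l"
      by (rule continuous_at_compose[OF _ cos_sqrt_cont, unfolded o_def]) (intro continuous_intros)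
    show "isCont (gg k) l" unfolding gg_def
      using p cc_pos[OF assms] by (intro continuous_intros c1) auto
  qed
  then show ?thesis by (simp add: continuous_at_imp_continuous_on)
qed

lemma left_tail:
  assumes "8/3 < k" "k < 8" "v > 0" "l < l1 k - v^2 * pi^2 * bb k - 1"
  shows "hh k v l < hh k v (l1 k)"
proof -
  have b: "bb k > 0" using bb_pos assms by simp
  have c: "cc k > 0" using cc_pos assms by simp
  define t where "t = l1 k - l"
  have t: "t > v^2 * pi^2 * bb k" using assms(4) by (simp add: t_def)
  have "v^2 * pi^2 * bb k \<ge> 0" using b by simp
  then have t0: "t > 0" using t by linarith
  have u: "aa k + bb k * l = - (bb k * t)" using b by (simp add: t_def l1_def algebra_simps)
  have bt: "bb k * t > 0" using b t0 by simp
  define s where "s = pi * sqrt (bb k * t)"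
  have s0: "s \<ge> 0" using bt unfolding s_def by (intro mult_nonneg_nonneg) auto
  have F: "cos_sqrt (aa k + bb k * l) = cosh s" unfolding u s_def cos_sqrt_def using bt by simp
  have "exp (-s) \<le> exp s" using s0 by simp
  then have "cosh s \<le> exp s" unfolding cosh_field_def by simp
  then have "ln (cosh s) \<le> ln (exp s)" using cosh_real_pos[of s] by (subst ln_le_cancel_iff) auto
  then have lc: "ln (cosh s) \<le> s" by simp
  have "gg k l = ln (cc k) - ln (cosh s)" unfolding gg_def F using c cosh_real_pos[of s] by (simp add: ln_div)
  then have g: "gg k l \<ge> ln (cc k) - s" using lc by linarith
  have ss: "s * s = pi * pi * (bb k * t)" unfolding s_def using bt
    by (simp add: algebra_simps)
  have "(v * s) * (v * s) = (v * v * pi * pi * bb k) * t" using ss by (simp add: algebra_simps)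
  also have "\<dots> < t * t" using t t0 by (intro mult_strict_right_mono) (auto simp: power2_eq_square)
  finally have sq: "(v * s) * (v * s) < t * t" .
  have vs: "v * s < t"
  proof (rule ccontr)
    assume "\<not> v * s < t"
    then have "t \<le> v * s" by simp
    then have "t * t \<le> (v * s) * (v * s)" using t0 by (intro mult_mono) auto
    then show False using sq by simp
  qed
  have "v * (ln (cc k) - s) \<le> v * gg k l" using g assms(3) by (intro mult_left_mono) auto
  then have "hh k v l \<le> l - v * (ln (cc k) - s)" unfolding hh_def by linarith
  also have "\<dots> = l - v * ln (cc k) + v * s" by (simp add: algebra_simps)
  also have "\<dots> < l1 k - v * ln (cc k)" using vs unfolding t_def by linarith
  also have "\<dots> = hh k v (l1 k)" unfolding hh_def gg_l1[OF assms(1)] by simp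
  finally show ?thesis .
qed

lemma right_tail:
  assumes "8/3 < k" "k < 8" "v > 0"
  shows "\<exists>R. l1 k \<le> R \<and> R < lam0 k \<and> (\<forall>l. R < l \<and> l < lam0 k \<longrightarrow> hh k v l < hh k v (l1 k))"
proof -
  have b: "bb k > 0" using bb_pos assms by simp
  have c: "cc k > 0" using cc_pos assms by simp
  define e where "e = exp (- (lam0 k - l1 k) / v)"
  have e0: "e > 0" by (simp add: e_def)
  have q: "sqrt (1/4::real) = 1/2" by (simp add: real_sqrt_divide)
  have z: "cos_sqrt (1/4) = 0" by (simp add: cos_sqrt_def q)
  have "cos_sqrt \<midarrow>(1/4)\<rightarrow> 0" using cos_sqrt_cont[of "1/4"] unfolding isCont_def z .
  from LIM_D[OF this e0] obtain d where d: "d > 0"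
    "\<And>x. x \<noteq> 1/4 \<and> norm (x - 1/4) < d \<Longrightarrow> norm (cos_sqrt x - 0) < e" by blast
  define R where "R = max (l1 k) (lam0 k - d / bb k)"
  have R1: "l1 k \<le> R" by (simp add: R_def)
  have R2: "R < lam0 k" using l1_lt[OF assms(1)] b d(1) by (simp add: R_def)
  have "hh k v l < hh k v (l1 k)" if l: "R < l" "l < lam0 k" for l
  proof -
    define u where "u = aa k + bb k * l"
    have u1: "u < 1/4" using u_lt[OF assms(1) l(2)] by (simp add: u_def)
    have "lam0 k - d / bb k < l" using l(1) by (simp add: R_def)
    then have "bb k * (lam0 k - d / bb k) < bb k * l" using b by simp
    then have "bb k * lam0 k - d < bb k * l" using b by (simp add: right_diff_distrib)
    then have u2: "u > 1/4 - d" using lam0_u[OF assms(1)] by (simp add: u_def)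
    have Fe: "cos_sqrt u < e" using d(2)[of u] u1 u2 by auto
    have Fp: "cos_sqrt u > 0" using cos_sqrt_pos u1 by simp
    have "cc k / e < cc k / cos_sqrt u" using Fe Fp c by (simp add: frac_less2)
    then have "ln (cc k / e) < gg k l" unfolding gg_def u_def[symmetric] using c e0
      by (simp add: ln_less_cancel_iff Fp)
    moreover have "ln (cc k / e) = ln (cc k) + (lam0 k - l1 k) / v" using c e0 assms(3)
      by (simp add: ln_div e_def field_simps)
    ultimately have "v * (ln (cc k) + (lam0 k - l1 k) / v) < v * gg k l"
      using assms(3) by simp
    then have "v * ln (cc k) + (lam0 k - l1 k) < v * gg k l"
      using assms(3) by (simp add: distrib_left)
    then show ?thesis using l(2) unfolding hh_def gg_l1[OF assms(1)] by linarith
  qed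
  then show ?thesis using R1 R2 by blast
qed

lemma maximizer:
  assumes "8/3 < k" "k < 8" "v > 0"
  shows "\<exists>m<lam0 k. \<forall>l<lam0 k. hh k v l \<le> hh k v m"
proof -
  obtain R where R: "l1 k \<le> R" "R < lam0 k"
    "\<And>l. R < l \<Longrightarrow> l < lam0 k \<Longrightarrow> hh k v l < hh k v (l1 k)"
    using right_tail[OF assms] by blast
  define L where "L = l1 k - v^2 * pi^2 * bb k - 1"
  have b: "bb k > 0" using bb_pos assms by simp
  have "v^2 * pi^2 * bb k \<ge> 0" using b by simp
  then have L1: "L \<le> l1 k" by (simp add: L_def)
  have sub: "{L..R} \<subseteq> {..<lam0 k}" using R by auto
  have "continuous_on {L..R} (hh k v)" unfolding hh_def
    by (intro continuous_intros continuous_on_subset[OF gg_cont[OF assms(1,2)] sub])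
  from continuous_attains_sup[OF compact_Icc _ this] obtain m where
    m: "m \<in> {L..R}" "\<And>y. y \<in> {L..R} \<Longrightarrow> hh k v y \<le> hh k v m"
    using L1 R(1) by fastforce
  have ml: "hh k v (l1 k) \<le> hh k v m" using m(2) L1 R(1) by simp
  have "hh k v l \<le> hh k v m" if "l < lam0 k" for l
  proof -
    consider "l < L" | "l \<in> {L..R}" | "R < l" by force
    then show ?thesis
    proof cases
      case 1 then show ?thesis using left_tail[OF assms, of l] ml by (simp add: L_def)
    next
      case 2 then show ?thesis using m by simp
    next
      case 3 then show ?thesis using R(3)[OF 3 that] ml by simp
    qed
  qed
  then show ?thesis using m(1) R(2) by (intro exI[of _ m]) auto
qed

lemma gg_deriv:
  assumes "8/3 < k" "k < 8" "l < lam0 k"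
  shows "\<exists>D. (gg k has_real_derivative D) (at l)"
proof -
  have c: "cc k > 0" using cc_pos assms by simp
  obtain D0 where D0: "(cos_sqrt has_real_derivative D0) (at (aa k + bb k * l))"
    using cos_sqrt_deriv by blast
  have i: "((\<lambda>l. aa k + bb k * l) has_real_derivative bb k) (at l)"
    by (auto intro!: derivative_eq_intros)
  have d1: "((\<lambda>l. cos_sqrt (aa k + bb k * l)) has_real_derivative D0 * bb k) (at l)"
    using DERIV_chain2[OF D0 i] .
  define w where "w = cos_sqrt (aa k + bb k * l)"
  have w: "w > 0" unfolding w_def using cos_sqrt_pos u_lt[OF assms(1,3)] by simp
  have d2: "((\<lambda>x. ln (cc k / x)) has_real_derivative (- 1 / w)) (at w)"
    using w c by (auto intro!: derivative_eq_intros simp: field_simps power2_eq_square)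
  have "(gg k has_real_derivative (- 1 / w) * (D0 * bb k)) (at l)"
    unfolding gg_def using DERIV_chain2[OF d2[unfolded w_def] d1] by (simp add: w_def)
  then show ?thesis by blast
qed

lemma hh_crit:
  assumes "8/3 < k" "k < 8" "m < lam0 k" "\<forall>l<lam0 k. hh k v l \<le> hh k v m"
    "(gg k has_real_derivative D) (at m)"
  shows "1 - v * D = 0"
proof -
  have "(hh k v has_real_derivative 1 - v * D) (at m)" unfolding hh_def
    using assms(5) by (auto intro!: derivative_eq_intros)
  moreover have "\<forall>y. \<bar>m - y\<bar> < lam0 k - m \<longrightarrow> hh k v y \<le> hh k v m"
    using assms(4) by auto
  ultimately show ?thesis using DERIV_local_max assms(3) by (metis diff_gt_0_iff_gt)
qed

lemma gamma_pos:
  assumes "8/3 < k" "k < 8" "v > 0" "m < lam0 k" "\<forall>l<lam0 k. hh k v l \<le> hh k v m"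
  shows "gamma k v = ereal (hh k v m)"
proof -
  have "Lambda_star k (1/v) = ereal (m/v - gg k m)"
    unfolding Lambda_star_def
  proof (rule SUP_eqI)
    fix l :: real
    show "ereal (l * (1/v)) - Lambda k l \<le> ereal (m/v - gg k m)"
    proof (cases "l < lam0 k")
      case True
      have "l - v * gg k l \<le> m - v * gg k m" using assms(5) True by (simp add: hh_def)
      then have "(l - v * gg k l) / v \<le> (m - v * gg k m) / v" using assms(3)
        by (simp add: divide_right_mono)
      then have "l * (1/v) - gg k l \<le> m/v - gg k m" using assms(3)
        by (simp add: diff_divide_distrib)
      then show ?thesis using True by (simp add: Lambda_eq)
    next
      case False then show ?thesis by (simp add: Lambda_inf)
    qed
  next
    fix y assume "\<And>l. l \<in> UNIV \<Longrightarrow> ereal (l * (1/v)) - Lambda k l \<le> y"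
    from this[of m] show "ereal (m/v - gg k m) \<le> y" using assms(4) by (simp add: Lambda_eq)
  qed
  then have "gamma k v = ereal (v * (m/v - gg k m))" using assms(3) by (simp add: gamma_def)
  also have "v * (m/v - gg k m) = hh k v m" using assms(3) by (simp add: hh_def algebra_simps)
  finally show ?thesis .
qed

lemma gamma_cases:
  assumes "8/3 < k" "k < 8" "v \<ge> 0" "m < lam0 k"
  shows "\<exists>G. gamma k v = ereal G \<and> hh k v m \<le> G \<and>
           (G = hh k v m \<longrightarrow> v > 0 \<and> (\<forall>l<lam0 k. hh k v l \<le> hh k v m))"
proof (cases "v = 0")
  case True
  then show ?thesis using assms(4) by (intro exI[of _ "lam0 k"]) (simp add: gamma_def hh_def)
next
  case False
  then have v: "v > 0" using assms(3) by simp
  obtain m' where m': "m' < lam0 k" "\<forall>l<lam0 k. hh k v l \<le> hh k v m'"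
    using maximizer[OF assms(1,2) v] by blast
  show ?thesis using gamma_pos[OF assms(1,2) v m'] m' assms(4) v
    by (intro exI[of _ "hh k v m'"]) auto
qed

theorem proposition2p7:
  fixes \<kappa> :: real
  assumes "8 / 3 < \<kappa>" and "\<kappa> < 8"
  shows "strict_convex_on_ereal {0..} (gamma \<kappa>)"
  unfolding strict_convex_on_ereal_def
proof (intro ballI allI impI)
  fix x y t :: real
  assume x: "x \<in> {0..}" and y: "y \<in> {0..}" and h: "x \<noteq> y \<and> 0 < t \<and> t < 1"
  have x0: "x \<ge> 0" and y0: "y \<ge> 0" using x y by auto
  have t0: "t > 0" and t1: "1 - t > 0" using h by auto
  define z where "z = t * x + (1 - t) * y"
  have tx: "t * x \<ge> 0" and ty: "(1 - t) * y \<ge> 0" using x0 y0 t0 t1 by auto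
  have zpos: "z > 0"
  proof (cases "x > 0")
    case True
    then have "t * x > 0" using t0 by simp
    then show ?thesis using ty by (simp add: z_def)
  next
    case False
    then have "y > 0" using x0 y0 h by auto
    then have "(1 - t) * y > 0" using t1 by simp
    then show ?thesis using tx by (simp add: z_def)
  qed
  obtain m where m: "m < lam0 \<kappa>" "\<forall>l<lam0 \<kappa>. hh \<kappa> z l \<le> hh \<kappa> z m"
    using maximizer[OF assms zpos] by blast
  have gz: "gamma \<kappa> z = ereal (hh \<kappa> z m)" using gamma_pos[OF assms zpos m] .
  obtain Gx where Gx: "gamma \<kappa> x = ereal Gx" "hh \<kappa> x m \<le> Gx"
    "Gx = hh \<kappa> x m \<longrightarrow> x > 0 \<and> (\<forall>l<lam0 \<kappa>. hh \<kappa> x l \<le> hh \<kappa> x m)"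
    using gamma_cases[OF assms x0 m(1)] by blast
  obtain Gy where Gy: "gamma \<kappa> y = ereal Gy" "hh \<kappa> y m \<le> Gy"
    "Gy = hh \<kappa> y m \<longrightarrow> y > 0 \<and> (\<forall>l<lam0 \<kappa>. hh \<kappa> y l \<le> hh \<kappa> y m)"
    using gamma_cases[OF assms y0 m(1)] by blast
  have lin: "hh \<kappa> z m = t * hh \<kappa> x m + (1 - t) * hh \<kappa> y m"
    by (simp add: hh_def z_def algebra_simps)
  have strict: "hh \<kappa> z m < t * Gx + (1 - t) * Gy"
  proof (rule ccontr)
    assume "\<not> ?thesis"
    then have le: "t * (Gx - hh \<kappa> x m) + (1 - t) * (Gy - hh \<kappa> y m) \<le> 0"
      using lin by (simp add: algebra_simps)
    have a1: "t * (Gx - hh \<kappa> x m) \<ge> 0" using t0 Gx(2) by simp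
    have a2: "(1 - t) * (Gy - hh \<kappa> y m) \<ge> 0" using t1 Gy(2) by simp
    have "t * (Gx - hh \<kappa> x m) = 0" using le a1 a2 by linarith
    then have ex: "Gx = hh \<kappa> x m" using t0 by simp
    have "(1 - t) * (Gy - hh \<kappa> y m) = 0" using le a1 a2 by linarith
    then have ey: "Gy = hh \<kappa> y m" using t1 by simp
    obtain D where D: "(gg \<kappa> has_real_derivative D) (at m)"
      using gg_deriv[OF assms m(1)] by blast
    have "1 - x * D = 0" using hh_crit[OF assms m(1) _ D] Gx(3) ex by blast
    moreover have "1 - y * D = 0" using hh_crit[OF assms m(1) _ D] Gy(3) ey by blast
    ultimately have "x * D = y * D" "D \<noteq> 0" by auto
    then show False using h by simp
  qed
  have "ereal t * gamma \<kappa> x + ereal (1 - t) * gamma \<kappa> y = ereal (t * Gx + (1 - t) * Gy)"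
    using Gx(1) Gy(1) by simp
  then show "gamma \<kappa> (t * x + (1 - t) * y) < ereal t * gamma \<kappa> x + ereal (1 - t) * gamma \<kappa> y"
    using gz strict by (simp add: z_def)
qed

end
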